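(* There is a constant $C > 0$ such that for every real $x \ge 2$, $$\sum_{\substack{2 \le n \le x \\ P(n)^2 \le n}} f(n) \le C\, x^{3/2} \log x.$$
   Context: For a positive integer $n$, $f(n)$ denotes the smallest positive integer $m$ such that $n$ divides $m!$. For an integer $n \ge 2$, $P(n)$ denotes the largest prime dividing $n$. $\log$ is the natural logarithm. *)

theory Defs
  imports "HOL-Analysis.Analysis" "HOL-Computational_Algebra.Primes"
begin

definition kempner :: "nat \<Rightarrow> nat" where
  "kempner n = (LEAST m. 0 < m \<and> n dvd fact m)"

text \<open>Largest prime factor of n (meaningful for n \<ge> 2).\<close>
definition largest_prime_factor :: "nat \<Rightarrow> nat" where
  "largest_prime_factor n = Max (prime_factors n)"

end

theory Submission
  imports Defs
begin

lemma pow_dvd_fact: "(q::nat) > 0 \<Longrightarrow> q ^ k dvd fact (k * q)"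
proof (induction k)
  case 0 then show ?case by simp
next
  case (Suc k)
  show ?case
  proof (cases "q = 0")
    case True then show ?thesis using Suc.prems by simp
  next
    case False
    have e: "Suc k * q = Suc (k * q + q - 1)" using False by simp
    have f: "fact (Suc k * q) = (Suc k * q) * fact (k * q + q - 1)"
      by (metis e fact_Suc of_nat_id)
    have d1: "q dvd Suc k * q" by (rule dvd_triv_right)
    have d2: "fact (k*q) dvd (fact (k * q + q - 1) :: nat)"
      by (rule fact_dvd) (use False in linarith)
    have "q * fact (k*q) dvd (Suc k * q) * fact (k * q + q - 1)"
      by (rule mult_dvd_mono[OF d1 d2])
    hence d3: "q * fact (k*q) dvd fact (Suc k * q)" by (simp only: f)
    have ih: "q ^ k dvd fact (k * q)" using Suc.IH Suc.prems by blast
    have "q ^ Suc k = q * q ^ k" by (rule power_Suc)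
    also have "\<dots> dvd q * fact (k*q)" by (rule mult_dvd_mono[OF dvd_refl ih])
    also have "\<dots> dvd fact (Suc k * q)" by (rule d3)
    finally show ?thesis .
  qed
qed

lemma dvd_fact_bound:
  fixes n k :: nat
  assumes n: "n \<ge> 2" and nk: "n \<le> 2 ^ k"
  shows "n dvd fact (k * largest_prime_factor n)"
proof (rule multiplicity_le_imp_dvd)
  show "n \<noteq> 0" using n by simp
  fix q :: nat assume q: "prime q"
  show "multiplicity q n \<le> multiplicity q (fact (k * largest_prime_factor n))"
  proof (cases "q dvd n")
    case False then show ?thesis by (simp add: not_dvd_imp_multiplicity_0)
  next
    case True
    have qpf: "q \<in> prime_factors n" using True q n by (auto simp: prime_factors_dvd)
    have fin: "finite (prime_factors n)" by simp
    have qle: "q \<le> largest_prime_factor n"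
      unfolding largest_prime_factor_def using qpf fin by simp
    have "q ^ multiplicity q n \<le> n"
      using multiplicity_dvd[of q n] n by (simp add: dvd_imp_le)
    also have "\<dots> \<le> 2 ^ k" by (rule nk)
    also have "\<dots> \<le> q ^ k" using prime_ge_2_nat[OF q] by (simp add: power_mono)
    finally have mk: "multiplicity q n \<le> k"
      using power_le_imp_le_exp[OF prime_gt_1_nat[OF q]] by blast
    have "q ^ k dvd fact (k * q)" by (rule pow_dvd_fact) (use q prime_gt_0_nat in blast)
    also have "fact (k*q) dvd (fact (k * largest_prime_factor n) :: nat)"
      by (rule fact_dvd) (use qle in simp)
    finally have dd: "q ^ k dvd fact (k * largest_prime_factor n)" .
    have "k \<le> multiplicity q (fact (k * largest_prime_factor n))"
      by (rule multiplicity_geI[OF _ _ dd]) (use q prime_gt_1_nat in auto)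
    then show ?thesis using mk by simp
  qed
qed

lemma kempner_bound:
  fixes n :: nat
  assumes n: "n \<ge> 2" and P: "(largest_prime_factor n)^2 \<le> n"
  shows "real (kempner n) \<le> sqrt n * (log 2 n + 1)"
proof -
  define k where "k = nat \<lceil>log 2 n\<rceil>"
  have ln0: "log 2 n \<ge> 1" using n by simp
  have "real n = 2 powr log 2 n" using n by simp
  also have "\<dots> \<le> 2 powr k" unfolding k_def
    by (rule powr_mono) (use ln0 in auto)
  also have "\<dots> = real (2 ^ k)" by (simp add: powr_realpow)
  finally have nk: "n \<le> 2 ^ k" by linarith
  have kle: "real k \<le> log 2 n + 1" unfolding k_def using ln0 by linarith
  have k1: "k \<ge> 1" unfolding k_def using ln0 by linarith
  obtain p :: nat where p: "prime p" "p dvd n" using prime_factor_nat[of n] n by auto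
  have "p \<in> prime_factors n" using p n by (auto simp: prime_factors_dvd)
  hence ne: "prime_factors n \<noteq> {}" by auto
  have "largest_prime_factor n \<in> prime_factors n"
    unfolding largest_prime_factor_def using ne by simp
  then have Ppos: "largest_prime_factor n > 0" by (auto intro: prime_gt_0_nat)
  have "kempner n \<le> k * largest_prime_factor n"
    unfolding kempner_def
    by (rule Least_le) (use k1 Ppos dvd_fact_bound[OF n nk] in simp)
  hence "real (kempner n) \<le> real k * real (largest_prime_factor n)"
    by (metis of_nat_le_iff of_nat_mult)
  also have "\<dots> \<le> (log 2 n + 1) * sqrt n"
  proof (rule mult_mono)
    have "real (largest_prime_factor n) ^ 2 \<le> real n"
      using P by (metis of_nat_le_iff of_nat_power)
    then show "real (largest_prime_factor n) \<le> sqrt n"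
      by (rule real_le_rsqrt)
    show "real k \<le> log 2 n + 1" by (rule kle)
    show "0 \<le> log 2 n + 1" using ln0 by linarith
    show "0 \<le> real (largest_prime_factor n)" by (rule of_nat_0_le_iff)
  qed
  finally show ?thesis by (simp only: mult.commute)
qed

theorem mainTheorem5:
  "\<exists>C::real. C > 0 \<and> (\<forall>x::real. x \<ge> 2 \<longrightarrow>
     (\<Sum>n\<in>{n::nat. 2 \<le> n \<and> real n \<le> x \<and> (largest_prime_factor n)^2 \<le> n}.
        real (kempner n)) \<le> C * x powr (3/2) * ln x)"
proof (intro exI[of _ "2 / ln 2"] conjI allI impI)
  show "(0::real) < 2 / ln 2" by simp
  fix x :: real assume x: "x \<ge> 2"
  define S where "S = {n::nat. 2 \<le> n \<and> real n \<le> x \<and> (largest_prime_factor n)^2 \<le> n}"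
  have Ssub: "S \<subseteq> {1..nat \<lfloor>x\<rfloor>}" unfolding S_def using x
    by (auto simp: le_nat_floor)
  have finS: "finite S" using Ssub finite_subset by blast
  have cardS: "real (card S) \<le> x"
  proof -
    have "card S \<le> card {1..nat \<lfloor>x\<rfloor>}" using card_mono[OF _ Ssub] by simp
    hence "real (card S) \<le> real (nat \<lfloor>x\<rfloor>)" by simp
    also have "\<dots> \<le> x" using x by linarith
    finally show ?thesis .
  qed
  define B where "B = sqrt x * (log 2 x + 1)"
  have lx: "log 2 x \<ge> 1" using x by simp
  have "(\<Sum>n\<in>S. real (kempner n)) \<le> (\<Sum>n\<in>S. B)"
  proof (rule sum_mono)
    fix n assume nS: "n \<in> S"
    hence n2: "n \<ge> 2" and nx: "real n \<le> x" and P: "(largest_prime_factor n)^2 \<le> n"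
      unfolding S_def by auto
    have "real (kempner n) \<le> sqrt n * (log 2 n + 1)" by (rule kempner_bound[OF n2 P])
    also have "\<dots> \<le> B" unfolding B_def
    proof (rule mult_mono)
      show "log 2 (real n) + 1 \<le> log 2 x + 1" using nx n2 by simp
    qed (use nx n2 lx in auto)
    finally show "real (kempner n) \<le> B" .
  qed
  also have "\<dots> = real (card S) * B" by simp
  also have "\<dots> \<le> x * B" by (rule mult_right_mono[OF cardS]) (use lx x in \<open>simp add: B_def\<close>)
  also have "\<dots> \<le> 2 / ln 2 * x powr (3/2) * ln x"
  proof -
    have xp: "x powr (3/2) = x * sqrt x"
      proof -
      have "x powr (3/2) = x powr (1 + 1/2)" by simp
      also have "\<dots> = x * x powr (1/2)" using x by (simp only: powr_add powr_one_gt_zero_iff) (simp add: powr_one)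
      finally have h: "x powr (3/2) = x * x powr (1/2)" .
      have e: "x powr (1/2) = sqrt x" using x by (intro powr_half_sqrt) simp
      show ?thesis using h e by metis
    qed
    have l2: "ln (2::real) > 0" by simp
    have "ln x \<ge> ln 2" using x by simp
    hence "log 2 x + 1 \<le> 2 / ln 2 * ln x"
      unfolding log_def using l2 by (simp add: field_simps)
    hence "x * sqrt x * (log 2 x + 1) \<le> x * sqrt x * (2 / ln 2 * ln x)"
      using x by (intro mult_left_mono) auto
    thus ?thesis unfolding B_def xp by (simp add: mult_ac)
  qed
  finally show "(\<Sum>n\<in>{n::nat. 2 \<le> n \<and> real n \<le> x \<and> (largest_prime_factor n)^2 \<le> n}.
        real (kempner n)) \<le> 2 / ln 2 * x powr (3/2) * ln x" unfolding S_def .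
qed

end
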